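(* Let $0<\gamma<\delta<1$ and set $\beta=\sqrt{1-\delta^2}$. Then there exists a constant $C>0$, depending only on $\gamma$ and $\delta$, such that for every positive real number $m$, \[J_m(\gamma m)<C\left(\frac{\gamma}{\delta}\right)^{\beta m}J_m(\delta m).\]
   Context: $J_m$ denotes the Bessel function of the first kind of order $m$, i.e. the solution of $x^2J_m''(x)+xJ_m'(x)+(x^2-m^2)J_m(x)=0$ that is bounded at the origin, normalized by $\lim_{x\to0}x^{-m}J_m(x)=2^{-m}\Gamma(m+1)^{-1}$. *)

theory Defs
  imports "HOL-Analysis.Analysis"
begin

text \<open>Bessel function of the first kind of real order m, via its standard power series
  J_m(x) = sum_k (-1)^k / (k! Gamma(m+k+1)) (x/2)^(2k+m), used for x > 0.
  This series is the unique solution of Bessel's equation bounded at the origin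
  with the normalisation x^(-m) J_m(x) -> 2^(-m)/Gamma(m+1).\<close>
definition besselJ :: "real \<Rightarrow> real \<Rightarrow> real" where
  "besselJ m x = (\<Sum>k. (-1)^k / (fact k * Gamma (m + real k + 1)) * (x / 2) powr (2 * real k + m))"

end

theory Submission
  imports Defs
begin

definition ca :: "real \<Rightarrow> nat \<Rightarrow> real" where
  "ca m n = (-1)^n / (fact n * Gamma (m + real n + 1))"

lemma Gamma_pos_step: "(x::real) > 0 \<Longrightarrow> Gamma (x + 1) = x * Gamma x"
  by (rule Gamma_plus1) (auto simp: nonpos_Ints_def)

lemma Gamma_mono_nat: assumes "m > 0" shows "Gamma (m + 1) \<le> Gamma (m + real n + 1)"
proof (induction n)
  case 0 then show ?case by simp
next
  case (Suc n)
  have "Gamma (m + real (Suc n) + 1) = (m + real n + 1) * Gamma (m + real n + 1)"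
    using Gamma_pos_step[of "m + real n + 1"] assms by (simp add: add_ac)
  moreover have gp: "Gamma (m + real n + 1) > 0" using assms by simp
  moreover have "1 * Gamma (m + real n + 1) \<le> (m + real n + 1) * Gamma (m + real n + 1)"
    by (rule mult_right_mono) (use gp assms in auto)
  ultimately show ?case using Suc by linarith
qed

lemma ca_summable: assumes "m > 0" shows "summable (\<lambda>n. ca m n * y ^ n)"
proof (rule summable_comparison_test[OF _ summable_mult[OF summable_exp[of "\<bar>y\<bar>"], of "1 / Gamma (m+1)"]])
  show "\<exists>N. \<forall>n\<ge>N. norm (ca m n * y ^ n) \<le> 1 / Gamma (m + 1) * (inverse (fact n) * \<bar>y\<bar> ^ n)"
  proof (intro exI allI impI)
    fix n :: nat
    have g1: "Gamma (m+1) > 0" using assms by simp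
    have g2: "Gamma (m + 1) \<le> Gamma (m + real n + 1)" by (rule Gamma_mono_nat[OF assms])
    have "norm (ca m n * y ^ n) = \<bar>y\<bar>^n / (fact n * Gamma (m + real n + 1))"
      using g1 g2 by (simp add: ca_def abs_mult power_abs abs_divide)
    also have "\<dots> \<le> \<bar>y\<bar>^n / (fact n * Gamma (m + 1))"
      using g1 g2 by (intro divide_left_mono mult_left_mono) auto
    finally show "norm (ca m n * y ^ n) \<le> 1 / Gamma (m + 1) * (inverse (fact n) * \<bar>y\<bar> ^ n)"
      by (simp add: field_simps)
  qed
qed

lemma ca_rec: assumes "m > 0"
  shows "real (Suc n) * (real (Suc n) + m) * ca m (Suc n) = - ca m n"
proof -
  define G where "G = Gamma (m + real n + 1)"
  have "Gamma (m + real (Suc n) + 1) = (m + real n + 1) * G"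
    using Gamma_pos_step[of "m + real n + 1"] assms by (simp add: add_ac G_def)
  moreover have "G > 0" using assms by (simp add: G_def)
  moreover have "(fact n :: real) > 0" by simp
  ultimately show ?thesis using assms
    unfolding ca_def G_def[symmetric] by (simp add: divide_simps)
qed

definition FF :: "real \<Rightarrow> real \<Rightarrow> real" where "FF m y = (\<Sum>n. ca m n * y ^ n)"
definition FD :: "real \<Rightarrow> real \<Rightarrow> real" where "FD m y = (\<Sum>n. diffs (ca m) n * y ^ n)"
definition WW :: "real \<Rightarrow> real \<Rightarrow> real" where "WW m y = (\<Sum>n. (real n * ca m n) * y ^ n)"

lemma FF_deriv: assumes "m > 0" shows "(FF m has_real_derivative FD m y) (at y)"
  unfolding FF_def[abs_def] FD_def
  by (rule termdiffs_strong_converges_everywhere) (rule ca_summable[OF assms])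

lemma FD_summable: assumes "m > 0" shows "summable (\<lambda>n. diffs (ca m) n * y ^ n)"
  by (rule termdiff_converges_all) (rule ca_summable[OF assms])

lemma WW_sums: assumes "m > 0" shows "(\<lambda>n. (real n * ca m n) * y ^ n) sums (y * FD m y)"
proof -
  have "(\<lambda>n. y * (diffs (ca m) n * y ^ n)) sums (y * FD m y)"
    unfolding FD_def by (rule sums_mult, rule summable_sums, rule FD_summable[OF assms])
  moreover have "(\<lambda>n. y * (diffs (ca m) n * y ^ n)) = (\<lambda>n. (real (Suc n) * ca m (Suc n)) * y ^ Suc n)"
    by (auto simp: diffs_def)
  ultimately have "(\<lambda>n. (real (Suc n) * ca m (Suc n)) * y ^ Suc n) sums (y * FD m y)" by simp
  then show ?thesis
    using sums_Suc_iff[of "\<lambda>n. (real n * ca m n) * y ^ n" "y * FD m y"] by simp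
qed

lemma WW_eq: assumes "m > 0" shows "WW m y = y * FD m y"
  unfolding WW_def using WW_sums[OF assms] sums_unique by metis

lemma WW_deriv: assumes "m > 0" shows "(WW m has_real_derivative (- m * FD m y - FF m y)) (at y)"
proof -
  have s: "\<And>y. summable (\<lambda>n. (real n * ca m n) * y ^ n)"
    using WW_sums[OF assms] sums_summable by blast
  have d: "(WW m has_real_derivative (\<Sum>n. diffs (\<lambda>n. real n * ca m n) n * y ^ n)) (at y)"
    unfolding WW_def[abs_def]
    by (rule termdiffs_strong_converges_everywhere) (rule s)
  have c: "diffs (\<lambda>n. real n * ca m n) n * y ^ n = (- m) * (diffs (ca m) n * y ^ n) - ca m n * y ^ n" for n
  proof -
    have "real (Suc n) * (real (Suc n) + m) * ca m (Suc n) = - ca m n" by (rule ca_rec[OF assms])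
    then have h2: "real (Suc n) * (real (Suc n) + m) * ca m (Suc n) * y ^ n = - ca m n * y ^ n" by simp
    show ?thesis unfolding diffs_def using h2 by (simp add: algebra_simps)
  qed
  have "(\<Sum>n. diffs (\<lambda>n. real n * ca m n) n * y ^ n) = (\<Sum>n. (- m) * (diffs (ca m) n * y ^ n) - ca m n * y ^ n)"
    by (simp only: c)
  also have "\<dots> = (\<Sum>n. (- m) * (diffs (ca m) n * y ^ n)) - (\<Sum>n. ca m n * y ^ n)"
    by (rule suminf_diff[symmetric], rule summable_mult[OF FD_summable[OF assms]], rule ca_summable[OF assms])
  also have "\<dots> = - m * FD m y - FF m y"
    unfolding FD_def FF_def by (subst suminf_mult) (auto intro!: FD_summable assms)
  finally show ?thesis using d by simp
qed

lemma FF_0: "FF m 0 = 1 / Gamma (m + 1)"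
  unfolding FF_def powser_zero by (simp add: ca_def)

definition sr :: "real \<Rightarrow> real \<Rightarrow> real" where "sr m y = sqrt (m^2 - 4 * y)"
definition rr :: "real \<Rightarrow> real \<Rightarrow> real" where "rr m y = (m - sr m y) / 2"
definition PP :: "real \<Rightarrow> real \<Rightarrow> real" where "PP m y = rr m y * FF m y + WW m y"
definition EE :: "real \<Rightarrow> real \<Rightarrow> real" where "EE m y = exp (sr m y) * (m - sr m y) powr m"
definition QQ :: "real \<Rightarrow> real \<Rightarrow> real" where "QQ m y = PP m y * EE m y"

lemma sr_facts: assumes "m > 0" "0 \<le> y" "y < m^2/4"
  shows "0 < sr m y" "sr m y \<le> m" "(sr m y)^2 = m^2 - 4*y" "0 < y \<Longrightarrow> sr m y < m"
proof -
  show "0 < sr m y" using assms by (simp add: sr_def)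
  have "sqrt (m^2 - 4*y) \<le> sqrt (m^2)" by (rule real_sqrt_le_mono) (use assms in simp)
  then show "sr m y \<le> m" using assms unfolding sr_def by simp
  show "(sr m y)^2 = m^2 - 4*y" using assms by (simp add: sr_def)
  show "sr m y < m" if "0 < y"
  proof -
    have "sqrt (m^2 - 4*y) < sqrt (m^2)" by (rule real_sqrt_less_mono) (use assms that in simp)
    then show "sr m y < m" using assms unfolding sr_def by simp
  qed
qed

thm sr_facts

lemma sr_deriv: assumes "m > 0" "y < m^2/4" shows "DERIV (sr m) y :> -2 / sr m y"
proof -
  have d1: "DERIV (\<lambda>y. m^2 - 4*y) y :> -4" by (auto intro!: derivative_eq_intros)
  have pos: "m^2 - 4*y > 0" using assms by simp
  have "DERIV (\<lambda>y. sqrt (m^2 - 4*y)) y :> inverse (sqrt (m^2 - 4*y)) / 2 * (-4)"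
    by (rule DERIV_chain2[OF DERIV_real_sqrt[OF pos] d1])
  then show ?thesis unfolding sr_def[abs_def] by (simp add: field_simps)
qed

lemma EE_deriv: assumes "m > 0" "0 < y" "y < m^2/4" shows "DERIV (EE m) y :> EE m y / rr m y"
proof -
  define s where "s = sr m y"
  have s0: "0 < s" "s < m" using sr_facts[OF assms(1) _ assms(3)] assms(2) by (auto simp: s_def)
  have ds: "DERIV (sr m) y :> -2 / s" using sr_deriv[OF assms(1,3)] by (simp add: s_def)
  have de: "DERIV (\<lambda>y. exp (sr m y)) y :> exp s * (-2 / s)"
    using DERIV_chain2[OF DERIV_exp ds] by (simp add: s_def)
  have dg: "DERIV (\<lambda>y. m - sr m y) y :> 2 / s"
    using DERIV_diff[OF DERIV_const ds] by simp
  have dp: "DERIV (\<lambda>y. (m - sr m y) powr m) y :> m * (m - s) powr (m - 1) * (2 / s)"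
    using DERIV_fun_powr[OF dg, of m] s0 by (simp add: s_def)
  have "DERIV (EE m) y :> exp s * (-2 / s) * (m - s) powr m + m * (m - s) powr (m - 1) * (2 / s) * exp s"
    unfolding EE_def[abs_def] using DERIV_mult[OF de dp] by (simp add: s_def)
  moreover have "exp s * (-2 / s) * (m - s) powr m + m * (m - s) powr (m - 1) * (2 / s) * exp s
       = EE m y / rr m y"
  proof -
    have "(m - s) powr (m - 1) = (m - s) powr m / (m - s)" using s0 by (simp add: powr_diff)
    moreover have "exp s * (-2 / s) * P + m * (P / (m - s)) * (2 / s) * exp s
       = exp s * P / ((m - s) / 2)" for P
      using s0 by (simp add: field_simps)
    ultimately show ?thesis unfolding EE_def rr_def s_def[symmetric] by simp
  qed
  ultimately show ?thesis by simp
qed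

lemma PP_deriv: assumes "m > 0" "y < m^2/4"
  shows "DERIV (PP m) y :> FF m y / sr m y + rr m y * FD m y - m * FD m y - FF m y"
proof -
  have dr: "DERIV (rr m) y :> 1 / sr m y"
    using DERIV_cdivide[OF DERIV_diff[OF DERIV_const sr_deriv[OF assms]], where c=2]
    unfolding rr_def[abs_def] by simp
  have "DERIV (PP m) y :> (1 / sr m y * FF m y + FD m y * rr m y) + (- m * FD m y - FF m y)"
    unfolding PP_def[abs_def]
    by (rule DERIV_add[OF DERIV_mult[OF dr FF_deriv[OF assms(1)]] WW_deriv[OF assms(1)]])
  then show ?thesis by (simp add: algebra_simps)
qed

lemma QQ_deriv: assumes "m > 0" "0 < y" "y < m^2/4"
  shows "DERIV (QQ m) y :> EE m y * FF m y / sr m y"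
proof -
  define s where "s = sr m y"
  have s0: "0 < s" "s < m" "s^2 = m^2 - 4*y" using sr_facts[OF assms(1) _ assms(3)] assms(2) by (auto simp: s_def)
  have hy: "y = (m^2 - s^2) / 4" using s0 by simp
  have d: "DERIV (QQ m) y :> (FF m y / s + rr m y * FD m y - m * FD m y - FF m y) * EE m y + EE m y / rr m y * PP m y"
    unfolding QQ_def[abs_def] using DERIV_mult[OF PP_deriv[OF assms(1,3)] EE_deriv[OF assms]] by (simp add: s_def)
  have "(FF m y / s + rr m y * FD m y - m * FD m y - FF m y) * EE m y + EE m y / rr m y * PP m y
      = EE m y * FF m y / s"
    unfolding PP_def WW_eq[OF assms(1)] rr_def s_def[symmetric] using s0
    by (subst hy) (simp add: field_simps power2_eq_square)
  with d show ?thesis by (simp add: s_def)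
qed

lemma FF_cont: assumes "m > 0" shows "continuous_on S (FF m)"
  using DERIV_isCont[OF FF_deriv[OF assms]] by (intro continuous_at_imp_continuous_on) auto

lemma WW_cont: assumes "m > 0" shows "continuous_on S (WW m)"
  using DERIV_isCont[OF WW_deriv[OF assms]] by (intro continuous_at_imp_continuous_on) auto

lemma QQ_cont: assumes "m > 0" "t < m^2/4" shows "continuous_on {0..t} (QQ m)"
proof -
  have sc: "continuous_on {0..t} (sr m)" unfolding sr_def[abs_def] by (intro continuous_intros)
  have rc: "continuous_on {0..t} (rr m)" unfolding rr_def[abs_def] by (intro continuous_intros sc) auto
  have pc: "continuous_on {0..t} (PP m)" unfolding PP_def[abs_def]
    by (intro continuous_intros rc FF_cont WW_cont assms)
  have pw: "continuous_on {0..t} (\<lambda>y. (m - sr m y) powr m)"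
  proof (rule continuous_on_powr')
    show "continuous_on {0..t} (\<lambda>y. m - sr m y)" by (intro continuous_intros sc)
    show "continuous_on {0..t} (\<lambda>y. m)" by (intro continuous_intros)
    show "\<forall>x\<in>{0..t}. 0 \<le> m - sr m x \<and> (m - sr m x = 0 \<longrightarrow> 0 < m)"
      using sr_facts(2)[OF assms(1)] assms by auto
  qed
  have ec: "continuous_on {0..t} (EE m)" unfolding EE_def[abs_def]
    by (intro continuous_intros sc pw)
  show ?thesis unfolding QQ_def[abs_def] by (intro continuous_intros pc ec)
qed

lemma QQ_0: assumes "m > 0" shows "QQ m 0 = 0"
  using assms by (simp add: QQ_def EE_def sr_def)

lemma EE_pos: assumes "m > 0" "0 < y" "y < m^2/4" shows "EE m y > 0"
  using sr_facts(4)[OF assms(1) _ assms(3) assms(2)] assms(2) by (simp add: EE_def)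

lemma PP_pos_aux: assumes "m > 0" "0 < t" "t < m^2/4" and F: "\<And>u. 0 < u \<Longrightarrow> u < t \<Longrightarrow> FF m u > 0"
  shows "PP m t > 0"
proof -
  have "QQ m 0 < QQ m t"
  proof (rule DERIV_pos_imp_increasing_open[OF assms(2)])
    fix x assume x: "0 < x" "x < t"
    have "EE m x * FF m x / sr m x > 0"
      using EE_pos[OF assms(1) x(1)] F[OF x] sr_facts(1)[OF assms(1), of x] x assms by simp
    then show "\<exists>y. DERIV (QQ m) x :> y \<and> y > 0"
      using QQ_deriv[OF assms(1) x(1)] x assms by auto
  next
    show "continuous_on {0..t} (QQ m)" by (rule QQ_cont[OF assms(1,3)])
  qed
  then have "QQ m t > 0" using QQ_0[OF assms(1)] by simp
  then have "PP m t * EE m t > 0" by (simp add: QQ_def)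
  then show ?thesis using EE_pos[OF assms(1-3)] by (simp add: zero_less_mult_iff)
qed

lemma FF_pos: assumes "m > 0" "0 \<le> y" "y < m^2/4" shows "FF m y > 0"
proof (rule ccontr)
  assume "\<not> FF m y > 0"
  define Z where "Z = {0..y} \<inter> {t. FF m t \<le> 0}"
  have "closed {t. FF m t \<le> 0}"
    by (rule closed_Collect_le) (auto intro: FF_cont assms continuous_intros)
  then have "compact Z" unfolding Z_def by (intro compact_Int_closed) auto
  moreover have "Z \<noteq> {}" using \<open>\<not> FF m y > 0\<close> assms unfolding Z_def by auto
  ultimately obtain t0 where t0: "t0 \<in> Z" "\<And>t. t \<in> Z \<Longrightarrow> t0 \<le> t"
    using compact_attains_inf[of Z] by blast
  have F0: "FF m 0 > 0" using assms by (simp add: FF_0)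
  have t0Z: "0 \<le> t0" "t0 \<le> y" "FF m t0 \<le> 0" using t0(1) unfolding Z_def by auto
  then have t0pos: "0 < t0" using F0 by (cases "t0 = 0") auto
  have Fl: "FF m u > 0" if "0 < u" "u < t0" for u
  proof (rule ccontr)
    assume "\<not> FF m u > 0"
    then have "u \<in> Z" using that t0Z unfolding Z_def by auto
    then show False using t0(2) that by force
  qed
  have t0m: "t0 < m^2/4" using t0Z assms by simp
  have "PP m t0 > 0" by (rule PP_pos_aux[OF assms(1) t0pos t0m Fl])
  moreover have "rr m t0 \<ge> 0" using sr_facts(2)[OF assms(1) t0Z(1) t0m] by (simp add: rr_def)
  ultimately have "WW m t0 > 0" using t0Z(3) unfolding PP_def
    by (smt (verit) mult_nonneg_nonpos)
  then have "FD m t0 > 0" using t0pos by (simp add: WW_eq[OF assms(1)] zero_less_mult_iff)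
  then obtain d where d: "d > 0" "\<And>h. h > 0 \<Longrightarrow> h < d \<Longrightarrow> FF m (t0 - h) < FF m t0"
    using DERIV_pos_inc_left[OF FF_deriv[OF assms(1)]] by blast
  define h where "h = min d t0 / 2"
  have "h > 0" "h < d" "h < t0" using d t0pos by (auto simp: h_def)
  then have "FF m (t0 - h) < FF m t0" "FF m (t0 - h) > 0" using d Fl[of "t0 - h"] by auto
  then show False using t0Z(3) by linarith
qed

lemma PP_pos: assumes "m > 0" "0 < t" "t < m^2/4" shows "PP m t > 0"
  by (rule PP_pos_aux[OF assms]) (use FF_pos[OF assms(1)] assms in auto)

lemma H_incr: assumes "m > 0" "0 < y1" "y1 < y2" "y2 < m^2/4" and c: "\<And>y. y1 \<le> y \<Longrightarrow> y \<le> y2 \<Longrightarrow> rr m y \<le> c"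
  shows "y1 powr c * FF m y1 < y2 powr c * FF m y2"
proof (rule DERIV_pos_imp_increasing[OF assms(3)])
  fix x assume x: "y1 \<le> x" "x \<le> y2"
  have x0: "0 < x" "x < m^2/4" using x assms by auto
  have d: "DERIV (\<lambda>y. y powr c * FF m y) x :> c * x powr (c - 1) * FF m x + FD m x * x powr c"
    using DERIV_mult[OF has_real_derivative_powr[OF x0(1)] FF_deriv[OF assms(1)]] by simp
  have xp: "x powr c = x powr (c - 1) * x" using x0 by (simp add: powr_diff)
  have "c * x powr (c - 1) * FF m x + FD m x * x powr c = x powr (c - 1) * (PP m x + (c - rr m x) * FF m x)"
    unfolding xp PP_def WW_eq[OF assms(1)] by (simp add: algebra_simps)
  moreover have "PP m x + (c - rr m x) * FF m x > 0"
    using PP_pos[OF assms(1) x0] FF_pos[OF assms(1) _ x0(2)] x0 c[OF x] by (simp add: add_pos_nonneg)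
  ultimately have "c * x powr (c - 1) * FF m x + FD m x * x powr c > 0" using x0 by simp
  with d show "\<exists>y. DERIV (\<lambda>y. y powr c * FF m y) x :> y \<and> 0 < y" by blast
qed

lemma besselJ_FF: assumes "m > 0" "x > 0" shows "besselJ m x = (x/2) powr m * FF m ((x/2)^2)"
proof -
  have t: "(-1)^k / (fact k * Gamma (m + real k + 1)) * (x / 2) powr (2 * real k + m)
      = (x/2) powr m * (ca m k * ((x/2)^2)^k)" for k
  proof -
    have "(x / 2) powr (2 * real k + m) = (x/2) powr m * (x/2) powr (real (2*k))"
      by (simp add: powr_add mult_ac)
    also have "(x/2) powr (real (2*k)) = (x/2)^(2*k)" by (rule powr_realpow) (simp add: assms)
    then have "(x/2) powr m * (x/2) powr (real (2*k)) = (x/2) powr m * ((x/2)^2)^k" by (simp add: power_mult)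
    finally show ?thesis by (simp add: ca_def mult_ac)
  qed
  show ?thesis unfolding besselJ_def t FF_def
    by (rule suminf_mult) (rule ca_summable[OF assms(1)])
qed

lemma powr_sq: assumes "(x::real) > 0" shows "x powr a = (x^2) powr (a/2)"
  using assms by (simp add: powr_def ln_realpow)

theorem mainTheorem1:
  fixes \<gamma> \<delta> :: real
  assumes "0 < \<gamma>" and "\<gamma> < \<delta>" and "\<delta> < 1"
  shows "\<exists>C>0. \<forall>m::real. m > 0 \<longrightarrow>
           besselJ m (\<gamma> * m) < C * (\<gamma> / \<delta>) powr (sqrt (1 - \<delta>\<^sup>2) * m) * besselJ m (\<delta> * m)"
proof (intro exI[of _ 1] conjI allI impI)
  fix m :: real assume m: "m > 0"
  define \<beta> where "\<beta> = sqrt (1 - \<delta>^2)"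
  define c where "c = m * (1 - \<beta>) / 2"
  define y1 where "y1 = (\<gamma> * m / 2)^2"
  define y2 where "y2 = (\<delta> * m / 2)^2"
  have d0: "0 < \<delta>" using assms by simp
  have y1p: "0 < y1" using assms m by (simp add: y1_def)
  have y12: "y1 < y2" unfolding y1_def y2_def using assms m
    by (intro power_strict_mono) (auto intro!: mult_strict_right_mono divide_strict_right_mono)
  have y2m: "y2 < m^2/4"
  proof -
    have "\<delta>^2 < 1" using assms d0 by (simp add: power_less_one_iff abs_less_iff)
    then have "\<delta>^2 * m^2 < 1 * m^2" using m by (intro mult_strict_right_mono) auto
    then show ?thesis by (simp add: y2_def power_mult_distrib power_divide)
  qed
  have cr: "rr m y \<le> c" if "y1 \<le> y" "y \<le> y2" for y
  proof -
    have "sqrt (m^2 - 4 * y2) \<le> sqrt (m^2 - 4*y)" using that by simp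
    moreover have "m^2 - 4 * y2 = (1 - \<delta>^2) * m^2" by (simp add: y2_def power_mult_distrib power_divide algebra_simps)
    then have "sqrt (m^2 - 4 * y2) = \<beta> * m" using m by (simp add: \<beta>_def real_sqrt_mult)
    ultimately have "\<beta> * m \<le> sr m y" by (simp add: sr_def)
    then show ?thesis unfolding rr_def c_def by (simp add: field_simps)
  qed
  have H: "y1 powr c * FF m y1 < y2 powr c * FF m y2"
    by (rule H_incr[OF m y1p y12 y2m cr])
  have gm: "\<gamma> * m > 0" "\<delta> * m > 0" using assms m by auto
  have J1: "besselJ m (\<gamma> * m) = y1 powr (\<beta> * m / 2) * (y1 powr c * FF m y1)"
  proof -
    have "besselJ m (\<gamma> * m) = y1 powr (m/2) * FF m y1"
      unfolding besselJ_FF[OF m gm(1)] y1_def using gm by (subst powr_sq[of "\<gamma> * m / 2"]) auto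
    moreover have "y1 powr (m/2) = y1 powr (\<beta> * m / 2) * y1 powr c"
      by (simp add: powr_add[symmetric] c_def algebra_simps add_divide_distrib[symmetric])
    ultimately show ?thesis by simp
  qed
  have J2: "besselJ m (\<delta> * m) = y2 powr (\<beta> * m / 2) * (y2 powr c * FF m y2)"
  proof -
    have "besselJ m (\<delta> * m) = y2 powr (m/2) * FF m y2"
      unfolding besselJ_FF[OF m gm(2)] y2_def using gm by (subst powr_sq[of "\<delta> * m / 2"]) auto
    moreover have "y2 powr (m/2) = y2 powr (\<beta> * m / 2) * y2 powr c"
      by (simp add: powr_add[symmetric] c_def algebra_simps add_divide_distrib[symmetric])
    ultimately show ?thesis by simp
  qed
  have R: "(\<gamma> / \<delta>) powr (\<beta> * m) = y1 powr (\<beta> * m / 2) / y2 powr (\<beta> * m / 2)"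
  proof -
    have "(\<gamma> / \<delta>) powr (\<beta> * m) = ((\<gamma> / \<delta>)^2) powr (\<beta> * m / 2)"
      using assms d0 by (intro powr_sq) simp
    also have "(\<gamma> / \<delta>)^2 = y1 / y2" using m by (simp add: y1_def y2_def power_divide power_mult_distrib)
    finally show ?thesis by (simp add: powr_divide)
  qed
  have y2p: "y2 powr (\<beta> * m / 2) > 0" using y1p y12 by simp
  have "besselJ m (\<gamma> * m) < y1 powr (\<beta> * m / 2) * (y2 powr c * FF m y2)"
    unfolding J1 using H y1p by simp
  also have "\<dots> = 1 * (\<gamma> / \<delta>) powr (\<beta> * m) * besselJ m (\<delta> * m)"
    unfolding R J2 using y2p by simp
  finally show "besselJ m (\<gamma> * m) < 1 * (\<gamma> / \<delta>) powr (sqrt (1 - \<delta>\<^sup>2) * m) * besselJ m (\<delta> * m)"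
    by (simp add: \<beta>_def)
qed (simp)

end
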